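(* Let $\mathcal{M}=\langle M,\circ,e\rangle$ be an effective mge monoid and let $\mathcal{T}=\langle \Sigma^*\times\mathcal{M},Q,I,F,\Delta\rangle$ be a functional real-time monoidal finite-state transducer with $\langle\varepsilon,e\rangle\in L(\mathcal{T})$. Then there is a bimachine $\mathcal{B}=\langle\mathcal{M},\mathcal{A}_L,\mathcal{A}_R,\psi\rangle$ such that $\mathcal{A}_L$ has at most $2^{|Q|}$ states, $\mathcal{A}_R$ has at most $2^{|Q|}$ states, and $O_{\mathcal{B}}=O_{\mathcal{T}}$ (as partial functions $\Sigma^*\to M$).
   Context: A monoid $\langle M,\circ,e\rangle$ has right cancellation if $ac=bc$ implies $a=b$. A tuple $\langle m_1,\dots,m_n\rangle\in M^n$ is equalizable if there is $\langle x_1,\dots,x_n\rangle\in M^n$ (an equalizer) with $m_1x_1=\dots=m_nx_n$; an instance of an equalizer $\langle x_1,\dots,x_n\rangle$ is any $\langle x_1x,\dots,x_nx\rangle$ with $x\in M$; a most general equalizer (mge) is an equalizer of which every equalizer is an instance. An mge monoid is a monoid with right cancellation in which every equalizable pair has an mge. An element $m$ is invertible if $mn=e$ for some $n$ (denoted $m^{-1}$). An mge monoid is effective if (i) $M$ is represented as a recursive subset of $\mathbb{N}$ with computable operation, (ii) equality is decidable, (iii) it is decidable whether a pair is equalizable and there is a computable function $\eta:M^2\to M^2$ with $\eta(m,m')$ an mge of $\langle m,m'\rangle$ for every equalizable pair, (iv) inverses of invertible elements are computable. A monoidal finite-state transducer is $\mathcal{T}=\langle\Sigma^*\times\mathcal{M},Q,I,F,\Delta\rangle$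 with $\Sigma$ a finite alphabet, $Q$ finite, $I,F\subseteq Q$, and finite $\Delta\subseteq Q\times((\Sigma\cup\{\varepsilon\})\times M)\times Q$; it is real-time if $\Delta\subseteq Q\times(\Sigma\times M)\times Q$. The generalized transition relation $\Delta^*$ is the least set containing $\langle q,\langle\varepsilon,e\rangle,q\rangle$ for all $q$ and closed under: $\langle q_1,\langle u,w\rangle,q_2\rangle\in\Delta^*$ and $\langle q_2,\langle a,m\rangle,q_3\rangle\in\Delta$ imply $\langle q_1,\langle ua,wm\rangle,q_3\rangle\in\Delta^*$. $L(\mathcal{T})=\{\langle u,m\rangle:\exists p\in I,q\in F,\ \langle p,\langle u,m\rangle,q\rangle\in\Delta^*\}$. $\mathcal{T}$ is functional if $L(\mathcal{T})$ is (the graph of) a partial function, denoted $O_{\mathcal{T}}:\Sigma^*\to M$. A bimachine is $\mathcal{B}=\langle\mathcal{M},\mathcal{A}_L,\mathcal{A}_R,\psi\rangle$ where $\mathcal{A}_L=\langle\Sigma,L,s_L,L,\delta_L\rangle$ and $\mathcal{A}_R=\langle\Sigma,R,s_R,R,\delta_R\rangle$ are deterministic finite automata (all states final) and $\psi:L\times\Sigma\times R\to M$ is a partial function. Define $\psi^*(l,\varepsilon,r)=e$ and $\psi^*(l,t\sigma,r)=\psi^*(l,t,\delta_R(r,\sigma))\circ\psi(\delta_L^*(l,t),\sigma,r)$; the function represented by $\mathcal{B}$ is $O_{\mathcal{B}}(t)=\psi^*(s_L,t,s_R)$ (partial). *)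

theory Defs
  imports Main
begin

definition right_cancel :: "('m::monoid_mult) itself \<Rightarrow> bool" where
  "right_cancel _ \<longleftrightarrow> (\<forall>a b c::'m. a * c = b * c \<longrightarrow> a = b)"

definition is_equalizer :: "'m::monoid_mult \<Rightarrow> 'm \<Rightarrow> 'm \<times> 'm \<Rightarrow> bool" where
  "is_equalizer m1 m2 x \<longleftrightarrow> m1 * fst x = m2 * snd x"

definition equalizable :: "'m::monoid_mult \<Rightarrow> 'm \<Rightarrow> bool" where
  "equalizable m1 m2 \<longleftrightarrow> (\<exists>x. is_equalizer m1 m2 x)"

definition is_instance :: "'m::monoid_mult \<times> 'm \<Rightarrow> 'm \<times> 'm \<Rightarrow> bool" where
  "is_instance y x \<longleftrightarrow> (\<exists>z. y = (fst x * z, snd x * z))"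

definition is_mge :: "'m::monoid_mult \<Rightarrow> 'm \<Rightarrow> 'm \<times> 'm \<Rightarrow> bool" where
  "is_mge m1 m2 x \<longleftrightarrow> is_equalizer m1 m2 x \<and> (\<forall>y. is_equalizer m1 m2 y \<longrightarrow> is_instance y x)"

definition mge_monoid :: "('m::monoid_mult) itself \<Rightarrow> bool" where
  "mge_monoid T \<longleftrightarrow> right_cancel T \<and>
     (\<forall>m1 m2::'m. equalizable m1 m2 \<longrightarrow> (\<exists>x. is_mge m1 m2 x))"

text \<open>Effectiveness: only the non-computational content is expressible:
  M is represented injectively in the naturals, and there are an mge-function eta and
  an inverse function on invertible elements.\<close>

definition effective_mge_monoid :: "('m::monoid_mult) itself \<Rightarrow> bool" where
  "effective_mge_monoid T \<longleftrightarrow> mge_monoid T \<and>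
     (\<exists>enc::'m \<Rightarrow> nat. inj enc) \<and>
     (\<exists>eta::'m \<Rightarrow> 'm \<Rightarrow> 'm \<times> 'm. \<forall>m1 m2. equalizable m1 m2 \<longrightarrow> is_mge m1 m2 (eta m1 m2)) \<and>
     (\<exists>inv::'m \<Rightarrow> 'm. \<forall>m::'m. (\<exists>n. m * n = 1) \<longrightarrow> m * inv m = 1)"

text \<open>Transitions are labelled by (a, m) with a :: 'a option (None = epsilon).\<close>

type_synonym ('q,'a,'m) trans = "('q \<times> ('a option \<times> 'm) \<times> 'q) set"

definition lbl :: "'a option \<Rightarrow> 'a list" where
  "lbl a = (case a of None \<Rightarrow> [] | Some s \<Rightarrow> [s])"

inductive_set gen_trans :: "('q,'a,'m::monoid_mult) trans \<Rightarrow> ('q \<times> ('a list \<times> 'm) \<times> 'q) set"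
  for Delta where
  refl: "(q, ([], 1), q) \<in> gen_trans Delta"
| step: "(q1, (u, w), q2) \<in> gen_trans Delta \<Longrightarrow> (q2, (a, m), q3) \<in> Delta \<Longrightarrow>
         (q1, (u @ lbl a, w * m), q3) \<in> gen_trans Delta"

definition is_transducer :: "'a set \<Rightarrow> 'q set \<Rightarrow> 'q set \<Rightarrow> 'q set \<Rightarrow> ('q,'a,'m::monoid_mult) trans \<Rightarrow> bool" where
  "is_transducer Sig Q I F Delta \<longleftrightarrow> finite Sig \<and> finite Q \<and> I \<subseteq> Q \<and> F \<subseteq> Q \<and> finite Delta \<and>
     (\<forall>(p, (a, m), q) \<in> Delta. p \<in> Q \<and> q \<in> Q \<and> (\<forall>s. a = Some s \<longrightarrow> s \<in> Sig))"

definition real_time :: "('q,'a,'m::monoid_mult) trans \<Rightarrow> bool" where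
  "real_time Delta \<longleftrightarrow> (\<forall>(p, (a, m), q) \<in> Delta. a \<noteq> None)"

definition lang :: "'q set \<Rightarrow> 'q set \<Rightarrow> ('q,'a,'m::monoid_mult) trans \<Rightarrow> ('a list \<times> 'm) set" where
  "lang I F Delta = {(u, m). \<exists>p\<in>I. \<exists>q\<in>F. (p, (u, m), q) \<in> gen_trans Delta}"

definition functional :: "'q set \<Rightarrow> 'q set \<Rightarrow> ('q,'a,'m::monoid_mult) trans \<Rightarrow> bool" where
  "functional I F Delta \<longleftrightarrow> (\<forall>u m m'. (u, m) \<in> lang I F Delta \<longrightarrow> (u, m') \<in> lang I F Delta \<longrightarrow> m = m')"

definition out_T :: "'q set \<Rightarrow> 'q set \<Rightarrow> ('q,'a,'m::monoid_mult) trans \<Rightarrow> 'a list \<Rightarrow> 'm option" where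
  "out_T I F Delta u = (if \<exists>m. (u, m) \<in> lang I F Delta then Some (THE m. (u, m) \<in> lang I F Delta) else None)"

definition is_dfa :: "'a set \<Rightarrow> 's set \<Rightarrow> 's \<Rightarrow> ('s \<Rightarrow> 'a \<Rightarrow> 's) \<Rightarrow> bool" where
  "is_dfa Sig S s0 delta \<longleftrightarrow> finite S \<and> s0 \<in> S \<and> (\<forall>s\<in>S. \<forall>a\<in>Sig. delta s a \<in> S)"

definition delta_star :: "('s \<Rightarrow> 'a \<Rightarrow> 's) \<Rightarrow> 's \<Rightarrow> 'a list \<Rightarrow> 's" where
  "delta_star delta s t = fold (\<lambda>a q. delta q a) t s"

text \<open>psi_rev works on the reversed word: psi*(l, t sigma, r) =
  psi*(l, t, deltaR(r,sigma)) o psi(deltaL*(l,t), sigma, r).\<close>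

fun psi_rev :: "('l \<Rightarrow> 'a \<Rightarrow> 'l) \<Rightarrow> ('r \<Rightarrow> 'a \<Rightarrow> 'r) \<Rightarrow> ('l \<Rightarrow> 'a \<Rightarrow> 'r \<Rightarrow> 'm::monoid_mult option)
                 \<Rightarrow> 'l \<Rightarrow> 'a list \<Rightarrow> 'r \<Rightarrow> 'm option" where
  "psi_rev dL dR psi l [] r = Some 1"
| "psi_rev dL dR psi l (s # ts) r =
     (case psi_rev dL dR psi l ts (dR r s) of
        None \<Rightarrow> None
      | Some m \<Rightarrow> (case psi (delta_star dL l (rev ts)) s r of
                    None \<Rightarrow> None
                  | Some m' \<Rightarrow> Some (m * m')))"

definition psi_star :: "('l \<Rightarrow> 'a \<Rightarrow> 'l) \<Rightarrow> ('r \<Rightarrow> 'a \<Rightarrow> 'r) \<Rightarrow> ('l \<Rightarrow> 'a \<Rightarrow> 'r \<Rightarrow> 'm::monoid_mult option)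
                 \<Rightarrow> 'l \<Rightarrow> 'a list \<Rightarrow> 'r \<Rightarrow> 'm option" where
  "psi_star dL dR psi l t r = psi_rev dL dR psi l (rev t) r"

definition out_B :: "'l \<Rightarrow> ('l \<Rightarrow> 'a \<Rightarrow> 'l) \<Rightarrow> 'r \<Rightarrow> ('r \<Rightarrow> 'a \<Rightarrow> 'r)
                 \<Rightarrow> ('l \<Rightarrow> 'a \<Rightarrow> 'r \<Rightarrow> 'm::monoid_mult option) \<Rightarrow> 'a list \<Rightarrow> 'm option" where
  "out_B sL dL sR dR psi t = psi_star dL dR psi sL t sR"

end

theory Submission
  imports Defs
begin


lemma rcancel: "mge_monoid TYPE('m::monoid_mult) \<Longrightarrow> (a::'m) * c = b * c \<Longrightarrow> a = b"
  unfolding mge_monoid_def right_cancel_def by blast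

lemma lcancel:
  assumes mg: "mge_monoid TYPE('m::monoid_mult)" and e: "a * y1 = a * (y2::'m)"
  shows "y1 = y2"
proof -
  have "equalizable a a" using e unfolding equalizable_def is_equalizer_def
    by (intro exI[of _ "(y1,y2)"]) simp
  then obtain x where x: "is_mge a a x" using mg unfolding mge_monoid_def by blast
  have "is_equalizer a a (1,1)" by (simp add: is_equalizer_def)
  then obtain z where z: "(1::'m,1::'m) = (fst x * z, snd x * z)"
    using x unfolding is_mge_def is_instance_def by blast
  then have "fst x * z = snd x * z" by simp
  then have fx: "fst x = snd x" using rcancel[OF mg] by blast
  have "is_equalizer a a (y1,y2)" using e by (simp add: is_equalizer_def)
  then obtain k where "(y1,y2) = (fst x * k, snd x * k)"
    using x unfolding is_mge_def is_instance_def by blast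
  thus ?thesis using fx by simp
qed

lemma pair_transfer:
  assumes mg: "mge_monoid TYPE('m::monoid_mult)"
    and e1: "a*v = b*(v'::'m)" and e2: "a'*v = b'*v'" and e3: "a*y = b*y'"
  shows "a'*y = b'*y'"
proof -
  have "equalizable a b" using e1 unfolding equalizable_def is_equalizer_def
    by (intro exI[of _ "(v,v')"]) simp
  then obtain x where x: "is_mge a b x" using mg unfolding mge_monoid_def by blast
  obtain z' where z': "v = fst x * z'" "v' = snd x * z'"
    using x e1 unfolding is_mge_def is_instance_def is_equalizer_def by fastforce
  obtain z where z: "y = fst x * z" "y' = snd x * z"
    using x e3 unfolding is_mge_def is_instance_def is_equalizer_def by fastforce
  have "(a' * fst x) * z' = (b' * snd x) * z'" using e2 z' by (simp add: mult.assoc)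
  then have "a' * fst x = b' * snd x" using rcancel[OF mg] by blast
  then show ?thesis using z by (metis mult.assoc)
qed

definition eqz :: "('q \<Rightarrow> 'm::monoid_mult) \<Rightarrow> 'q set \<Rightarrow> ('q \<Rightarrow> 'm) \<Rightarrow> bool" where
  "eqz w X y \<longleftrightarrow> (\<forall>p\<in>X. \<forall>q\<in>X. w p * y p = w q * y q)"

definition mgeT :: "('q \<Rightarrow> 'm::monoid_mult) \<Rightarrow> 'q set \<Rightarrow> ('q \<Rightarrow> 'm) \<Rightarrow> bool" where
  "mgeT w X x \<longleftrightarrow> eqz w X x \<and> (\<forall>y. eqz w X y \<longrightarrow> (\<exists>z. \<forall>q\<in>X. y q = x q * z))"

lemma eqz_transfer:
  assumes mg: "mge_monoid TYPE('m::monoid_mult)"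
    and "eqz w X v" "eqz w' X v" "eqz w X (y::'q \<Rightarrow> 'm)"
  shows "eqz w' X y"
  unfolding eqz_def
proof (intro ballI)
  fix p q assume pq: "p \<in> X" "q \<in> X"
  have "w p * v p = w q * v q" "w' p * v p = w' q * v q" "w p * y p = w q * y q"
    using assms(2-4) pq unfolding eqz_def by blast+
  then show "w' p * y p = w' q * y q" by (rule pair_transfer[OF mg])
qed

lemma mgeT_transfer:
  assumes mg: "mge_monoid TYPE('m::monoid_mult)"
    and "eqz w X v" "eqz w' X v" "mgeT w X (x::'q \<Rightarrow> 'm)"
  shows "mgeT w' X x"
proof -
  have "eqz w' X x" using assms eqz_transfer[OF mg] unfolding mgeT_def by blast
  moreover have "\<exists>z. \<forall>q\<in>X. y q = x q * z" if "eqz w' X y" for y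
  proof -
    have "eqz w X y" using eqz_transfer[OF mg assms(3) assms(2) that] .
    then show ?thesis using assms(4) unfolding mgeT_def by blast
  qed
  ultimately show ?thesis unfolding mgeT_def by blast
qed

lemma mgeT_exists:
  assumes mg: "mge_monoid TYPE('m::monoid_mult)" and fin: "finite X"
  shows "eqz w X (y::'q \<Rightarrow> 'm) \<Longrightarrow> \<exists>x. mgeT w X x"
  using fin
proof (induction X arbitrary: y rule: finite_induct)
  case empty
  show ?case by (rule exI[of _ "\<lambda>_. 1"]) (simp add: mgeT_def eqz_def)
next
  case (insert a X)
  have "eqz w X y" using insert.prems unfolding eqz_def by blast
  then obtain x where x: "mgeT w X x" using insert.IH by blast
  show ?case
  proof (cases "X = {}")
    case True
    show ?thesis
      by (rule exI[of _ "\<lambda>_. 1"]) (auto simp: True mgeT_def eqz_def)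
  next
    case False
    then obtain p0 where p0: "p0 \<in> X" by blast
    define c where "c = w p0 * x p0"
    obtain z0 where z0: "\<forall>q\<in>X. y q = x q * z0" using x \<open>eqz w X y\<close> unfolding mgeT_def by blast
    have "w p0 * y p0 = w a * y a" using insert.prems p0 unfolding eqz_def by blast
    then have "c * z0 = w a * y a" using p0 z0 unfolding c_def by (simp add: mult.assoc)
    then have "equalizable c (w a)" unfolding equalizable_def is_equalizer_def
      by (intro exI[of _ "(z0, y a)"]) simp
    then obtain gh where gh: "is_mge c (w a) gh" using mg unfolding mge_monoid_def by blast
    define x' where "x' = (\<lambda>q. if q = a then snd gh else x q * fst gh)"
    have xe: "\<forall>p\<in>X. w p * x p = c" using x p0 unfolding mgeT_def eqz_def c_def by blast
    have ghe: "c * fst gh = w a * snd gh" using gh unfolding is_mge_def is_equalizer_def by blast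
    have "eqz w (insert a X) x'"
      unfolding eqz_def x'_def using xe ghe insert.hyps(2)
      by (auto simp: mult.assoc[symmetric])
    moreover have "\<exists>z. \<forall>q\<in>insert a X. y' q = x' q * z" if y': "eqz w (insert a X) y'" for y'
    proof -
      have "eqz w X y'" using y' unfolding eqz_def by blast
      then obtain k where k: "\<forall>q\<in>X. y' q = x q * k" using x unfolding mgeT_def by blast
      have "w p0 * y' p0 = w a * y' a" using y' p0 unfolding eqz_def by blast
      then have "c * k = w a * y' a" using p0 k unfolding c_def by (simp add: mult.assoc)
      then have "is_equalizer c (w a) (k, y' a)" by (simp add: is_equalizer_def)
      then obtain z where z: "(k, y' a) = (fst gh * z, snd gh * z)"
        using gh unfolding is_mge_def is_instance_def by blast
      show ?thesis
        using z k insert.hyps(2) by (intro exI[of _ z]) (auto simp: x'_def mult.assoc)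
    qed
    ultimately show ?thesis unfolding mgeT_def by blast
  qed
qed




lemma psi_star_snoc:
  "psi_star dL dR psi l (t @ [a]) r =
    (case psi_star dL dR psi l t (dR r a) of None \<Rightarrow> None
     | Some m \<Rightarrow> (case psi (delta_star dL l t) a r of None \<Rightarrow> None | Some m' \<Rightarrow> Some (m * m')))"
  unfolding psi_star_def by (simp only: rev_append rev.simps append.simps psi_rev.simps rev_rev_ident)

lemma psi_star_Nil: "psi_star dL dR psi l [] r = Some 1"
  by (simp add: psi_star_def)

lemma delta_star_snoc: "delta_star d s (t @ [a]) = d (delta_star d s t) a"
  by (simp add: delta_star_def)

lemma delta_star_Nil: "delta_star d s [] = s"
  by (simp add: delta_star_def)

locale bm =
  fixes Q I F :: "'q set" and Delta :: "('q,'a,'m::monoid_mult) trans"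
  assumes mg: "mge_monoid TYPE('m)"
    and rt: "real_time Delta"
    and fn: "functional I F Delta"
    and finQ: "finite Q" and IQ: "I \<subseteq> Q" and FQ: "F \<subseteq> Q"
    and DQ: "\<And>p a m q. (p,(a,m),q) \<in> Delta \<Longrightarrow> p \<in> Q \<and> q \<in> Q"
begin

lemma rtD: "(p,(a,m),q) \<in> Delta \<Longrightarrow> a \<noteq> None"
  using rt unfolding real_time_def by blast

lemma gen_Nil: "(p,([],m),q) \<in> gen_trans Delta \<longleftrightarrow> p = q \<and> m = 1"
proof
  assume "(p,([],m),q) \<in> gen_trans Delta"
  then show "p = q \<and> m = 1"
  proof (cases rule: gen_trans.cases)
    case (step u w q2 a m')
    then show ?thesis using rtD[of q2 a m' q] by (cases a) (auto simp: lbl_def)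
  qed auto
qed (auto intro: gen_trans.refl)

lemma gen_snoc: "(p,(u@[a],m),q) \<in> gen_trans Delta \<longleftrightarrow>
   (\<exists>s m1 m2. (p,(u,m1),s) \<in> gen_trans Delta \<and> (s,(Some a,m2),q) \<in> Delta \<and> m = m1*m2)"
proof
  assume "(p,(u@[a],m),q) \<in> gen_trans Delta"
  then show "\<exists>s m1 m2. (p,(u,m1),s) \<in> gen_trans Delta \<and> (s,(Some a,m2),q) \<in> Delta \<and> m = m1*m2"
  proof (cases rule: gen_trans.cases)
    case (step u' w q2 b m')
    then show ?thesis using rtD[of q2 b m' q] by (cases b) (auto simp: lbl_def)
  qed auto
next
  assume "\<exists>s m1 m2. (p,(u,m1),s) \<in> gen_trans Delta \<and> (s,(Some a,m2),q) \<in> Delta \<and> m = m1*m2"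
  then obtain s m1 m2 where "(p,(u,m1),s) \<in> gen_trans Delta" "(s,(Some a,m2),q) \<in> Delta" "m = m1*m2"
    by blast
  then show "(p,(u@[a],m),q) \<in> gen_trans Delta"
    using gen_trans.step[of p u m1 s Delta "Some a" m2 q] by (simp add: lbl_def)
qed

lemma gen_app: "(p,(u@v,m),q) \<in> gen_trans Delta \<longleftrightarrow>
   (\<exists>s m1 m2. (p,(u,m1),s) \<in> gen_trans Delta \<and> (s,(v,m2),q) \<in> gen_trans Delta \<and> m = m1*m2)"
proof (induction v arbitrary: m q rule: rev_induct)
  case Nil
  show ?case by (auto simp: gen_Nil)
next
  case (snoc x v)
  have "(p,(u@v@[x],m),q) \<in> gen_trans Delta \<longleftrightarrow>
     (\<exists>s m1 m2. (p,(u@v,m1),s) \<in> gen_trans Delta \<and> (s,(Some x,m2),q) \<in> Delta \<and> m = m1*m2)"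
    using gen_snoc[of p "u@v" x m q] by simp
  also have "\<dots> \<longleftrightarrow> (\<exists>s m1 m2. (p,(u,m1),s) \<in> gen_trans Delta \<and> (s,(v@[x],m2),q) \<in> gen_trans Delta \<and> m = m1*m2)"
  proof
    assume "\<exists>s m1 m2. (p,(u@v,m1),s) \<in> gen_trans Delta \<and> (s,(Some x,m2),q) \<in> Delta \<and> m = m1*m2"
    then obtain s m1 m2 where a: "(p,(u@v,m1),s) \<in> gen_trans Delta" "(s,(Some x,m2),q) \<in> Delta" "m = m1*m2"
      by blast
    from a(1) snoc.IH obtain s' n1 n2 where b: "(p,(u,n1),s') \<in> gen_trans Delta" "(s',(v,n2),s) \<in> gen_trans Delta" "m1 = n1*n2"
      by blast
    have "(s',(v@[x],n2*m2),q) \<in> gen_trans Delta" using gen_snoc b(2) a(2) by blast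
    moreover have "m = n1 * (n2 * m2)" using b(3) a(3) by (simp add: mult.assoc)
    ultimately show "\<exists>s m1 m2. (p,(u,m1),s) \<in> gen_trans Delta \<and> (s,(v@[x],m2),q) \<in> gen_trans Delta \<and> m = m1*m2"
      using b(1) by blast
  next
    assume "\<exists>s m1 m2. (p,(u,m1),s) \<in> gen_trans Delta \<and> (s,(v@[x],m2),q) \<in> gen_trans Delta \<and> m = m1*m2"
    then obtain s m1 m2 where a: "(p,(u,m1),s) \<in> gen_trans Delta" "(s,(v@[x],m2),q) \<in> gen_trans Delta" "m = m1*m2"
      by blast
    from a(2) gen_snoc obtain s' n1 n2 where b: "(s,(v,n1),s') \<in> gen_trans Delta" "(s',(Some x,n2),q) \<in> Delta" "m2 = n1*n2"
      by blast
    have "(p,(u@v,m1*n1),s') \<in> gen_trans Delta" using snoc.IH a(1) b(1) by blast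
    moreover have "m = (m1 * n1) * n2" using b(3) a(3) by (simp add: mult.assoc)
    ultimately show "\<exists>s m1 m2. (p,(u@v,m1),s) \<in> gen_trans Delta \<and> (s,(Some x,m2),q) \<in> Delta \<and> m = m1*m2"
      using b(2) by blast
  qed
  finally show ?case by simp
qed

lemma gen_cons: "(p,(a#u,m),q) \<in> gen_trans Delta \<longleftrightarrow>
   (\<exists>s m1 m2. (p,(Some a,m1),s) \<in> Delta \<and> (s,(u,m2),q) \<in> gen_trans Delta \<and> m = m1*m2)"
proof -
  have single: "(p,([a],m1),s) \<in> gen_trans Delta \<longleftrightarrow> (p,(Some a,m1),s) \<in> Delta" for m1 s
    using gen_snoc[of p "[]" a m1 s] by (simp add: gen_Nil)
  show ?thesis using gen_app[of p "[a]" u m q] single by simp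
qed

definition dLf :: "'q set \<Rightarrow> 'a \<Rightarrow> 'q set" where
  "dLf S a = {q'. \<exists>p\<in>S. \<exists>m. (p,(Some a,m),q') \<in> Delta}"
definition dRf :: "'q set \<Rightarrow> 'a \<Rightarrow> 'q set" where
  "dRf S a = {p. \<exists>q\<in>S. \<exists>m. (p,(Some a,m),q) \<in> Delta}"
definition reach :: "'a list \<Rightarrow> 'q set" where
  "reach t = delta_star dLf I t"
definition Rs :: "'a list \<Rightarrow> 'q set" where
  "Rs u = delta_star dRf F (rev u)"

lemma dLf_Q: "dLf S a \<subseteq> Q" unfolding dLf_def using DQ by blast
lemma dRf_Q: "dRf S a \<subseteq> Q" unfolding dRf_def using DQ by blast

lemma reach_Nil: "reach [] = I" by (simp add: reach_def delta_star_Nil)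
lemma reach_snoc: "reach (t@[a]) = dLf (reach t) a" by (simp add: reach_def delta_star_snoc)
lemma Rs_Nil: "Rs [] = F" by (simp add: Rs_def delta_star_Nil)
lemma Rs_cons: "Rs (a#u) = dRf (Rs u) a" by (simp add: Rs_def delta_star_snoc)

lemma reach_Q: "reach t \<subseteq> Q"
  by (cases t rule: rev_exhaust) (auto simp: reach_Nil reach_snoc IQ dest: dLf_Q[THEN subsetD])

lemma reach_iff: "q \<in> reach t \<longleftrightarrow> (\<exists>p\<in>I. \<exists>m. (p,(t,m),q) \<in> gen_trans Delta)"
proof (induction t arbitrary: q rule: rev_induct)
  case Nil
  then show ?case by (auto simp: reach_Nil gen_Nil)
next
  case (snoc x xs)
  show ?case
  proof
    assume "q \<in> reach (xs @ [x])"
    then obtain s m where s: "s \<in> reach xs" "(s,(Some x,m),q) \<in> Delta"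
      unfolding reach_snoc dLf_def by blast
    from s(1) snoc.IH obtain p m0 where "p \<in> I" "(p,(xs,m0),s) \<in> gen_trans Delta" by blast
    then show "\<exists>p\<in>I. \<exists>m. (p,(xs@[x],m),q) \<in> gen_trans Delta" using s(2) gen_snoc by blast
  next
    assume "\<exists>p\<in>I. \<exists>m. (p,(xs@[x],m),q) \<in> gen_trans Delta"
    then obtain p m where "p \<in> I" "(p,(xs@[x],m),q) \<in> gen_trans Delta" by blast
    then obtain s m1 m2 where "(p,(xs,m1),s) \<in> gen_trans Delta" "(s,(Some x,m2),q) \<in> Delta"
      using gen_snoc by blast
    then show "q \<in> reach (xs @ [x])" using snoc.IH \<open>p \<in> I\<close> unfolding reach_snoc dLf_def by blast
  qed
qed

lemma Rs_iff: "p \<in> Rs u \<longleftrightarrow> (\<exists>f\<in>F. \<exists>v. (p,(u,v),f) \<in> gen_trans Delta)"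
proof (induction u arbitrary: p)
  case Nil
  then show ?case by (auto simp: Rs_Nil gen_Nil)
next
  case (Cons a u)
  show ?case
  proof
    assume "p \<in> Rs (a#u)"
    then obtain s m where s: "s \<in> Rs u" "(p,(Some a,m),s) \<in> Delta"
      unfolding Rs_cons dRf_def by blast
    from s(1) Cons.IH obtain f v where "f \<in> F" "(s,(u,v),f) \<in> gen_trans Delta" by blast
    then show "\<exists>f\<in>F. \<exists>v. (p,(a#u,v),f) \<in> gen_trans Delta" using s(2) gen_cons by blast
  next
    assume "\<exists>f\<in>F. \<exists>v. (p,(a#u,v),f) \<in> gen_trans Delta"
    then obtain f v where "f \<in> F" "(p,(a#u,v),f) \<in> gen_trans Delta" by blast
    then obtain s m1 m2 where "(p,(Some a,m1),s) \<in> Delta" "(s,(u,m2),f) \<in> gen_trans Delta"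
      using gen_cons by blast
    then show "p \<in> Rs (a#u)" using Cons.IH \<open>f \<in> F\<close> unfolding Rs_cons dRf_def by blast
  qed
qed

definition w :: "'a list \<Rightarrow> 'q \<Rightarrow> 'm" where
  "w t q = (SOME m. \<exists>p\<in>I. (p,(t,m),q) \<in> gen_trans Delta)"
definition cont :: "'a list \<Rightarrow> 'q \<Rightarrow> 'm" where
  "cont u q = (SOME v. \<exists>f\<in>F. (q,(u,v),f) \<in> gen_trans Delta)"

lemma w_path: "q \<in> reach t \<Longrightarrow> \<exists>p\<in>I. (p,(t,w t q),q) \<in> gen_trans Delta"
  unfolding w_def reach_iff by (rule someI_ex) blast

lemma cont_path: "q \<in> Rs u \<Longrightarrow> \<exists>f\<in>F. (q,(u,cont u q),f) \<in> gen_trans Delta"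
  unfolding cont_def Rs_iff by (rule someI_ex) blast

lemma lang_comp: "p \<in> I \<Longrightarrow> (p,(t,m),q) \<in> gen_trans Delta \<Longrightarrow> f \<in> F \<Longrightarrow> (q,(u,v),f) \<in> gen_trans Delta
  \<Longrightarrow> (t@u, m*v) \<in> lang I F Delta"
  unfolding lang_def using gen_app by blast

lemma w_unique:
  assumes "p \<in> I" "(p,(t,m),q) \<in> gen_trans Delta" "q \<in> Rs u"
  shows "m = w t q"
proof -
  have qr: "q \<in> reach t" using assms reach_iff by blast
  obtain p' where p': "p' \<in> I" "(p',(t,w t q),q) \<in> gen_trans Delta" using w_path[OF qr] by blast
  obtain f v where f: "f \<in> F" "(q,(u,v),f) \<in> gen_trans Delta" using assms(3) Rs_iff by blast
  have "(t@u, m*v) \<in> lang I F Delta" "(t@u, w t q*v) \<in> lang I F Delta"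
    using lang_comp assms p' f by blast+
  then have "m * v = w t q * v" using fn unfolding functional_def by blast
  then show ?thesis using rcancel[OF mg] by blast
qed

lemma wc_lang: "q \<in> reach t \<Longrightarrow> q \<in> Rs u \<Longrightarrow> (t@u, w t q * cont u q) \<in> lang I F Delta"
  using w_path cont_path lang_comp by blast

lemma eqz_wc: "eqz (w t) (reach t \<inter> Rs u) (cont u)"
  unfolding eqz_def using wc_lang fn unfolding functional_def by blast

lemma mge_transfer_reach:
  "reach t1 = reach t2 \<Longrightarrow> mgeT (w t1) (reach t1 \<inter> Rs u) x \<Longrightarrow> mgeT (w t2) (reach t1 \<inter> Rs u) x"
proof -
  assume r: "reach t1 = reach t2" and m: "mgeT (w t1) (reach t1 \<inter> Rs u) x"
  have "eqz (w t2) (reach t1 \<inter> Rs u) (cont u)" using eqz_wc[of t2 u] r by simp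
  then show ?thesis using mgeT_transfer[OF mg eqz_wc[of t1 u] _ m] by blast
qed

definition xx :: "'q set \<Rightarrow> 'q set \<Rightarrow> 'q \<Rightarrow> 'm" where
  "xx l r = (if \<forall>t. reach t = l \<longrightarrow> mgeT (w t) (l \<inter> r) (\<lambda>_. 1) then (\<lambda>_. 1)
             else (SOME x. \<forall>t. reach t = l \<longrightarrow> mgeT (w t) (l \<inter> r) x))"

lemma xx_mge: "mgeT (w t) (reach t \<inter> Rs u) (xx (reach t) (Rs u))"
proof -
  have fin: "finite (reach t \<inter> Rs u)" using reach_Q finQ finite_subset by blast
  obtain x0 where x0: "mgeT (w t) (reach t \<inter> Rs u) x0"
    using mgeT_exists[OF mg fin eqz_wc] by blast
  have all: "\<forall>t'. reach t' = reach t \<longrightarrow> mgeT (w t') (reach t \<inter> Rs u) x0"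
  proof (intro allI impI)
    fix t' assume "reach t' = reach t"
    then show "mgeT (w t') (reach t \<inter> Rs u) x0" using mge_transfer_reach[of t t' u x0] x0 by simp
  qed
  show ?thesis
  proof (cases "\<forall>t'. reach t' = reach t \<longrightarrow> mgeT (w t') (reach t \<inter> Rs u) (\<lambda>_. 1)")
    case True then show ?thesis unfolding xx_def by simp
  next
    case False
    have e: "xx (reach t) (Rs u) = (SOME x. \<forall>t'. reach t' = reach t \<longrightarrow> mgeT (w t') (reach t \<inter> Rs u) x)"
      unfolding xx_def by (rule if_not_P[OF False])
    have "\<forall>t'. reach t' = reach t \<longrightarrow> mgeT (w t') (reach t \<inter> Rs u) (SOME x. \<forall>t'. reach t' = reach t \<longrightarrow> mgeT (w t') (reach t \<inter> Rs u) x)"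
      by (rule someI[where x=x0]) (rule all)
    then show ?thesis unfolding e by blast
  qed
qed

lemma w_Nil: "q \<in> I \<Longrightarrow> w [] q = 1"
  using w_path[of q "[]"] by (auto simp: reach_Nil gen_Nil)

lemma one_mge:
  assumes "\<forall>p\<in>X. \<forall>q\<in>X. ww p = (ww q :: 'm)"
  shows "mgeT ww X (\<lambda>_. 1)"
  unfolding mgeT_def
proof (intro conjI allI impI)
  show "eqz ww X (\<lambda>_. 1)" using assms unfolding eqz_def mult_1_right by blast
  fix y assume y: "eqz ww X y"
  show "\<exists>z. \<forall>q\<in>X. y q = 1 * z"
  proof (cases "X = {}")
    case False
    then obtain q0 where q0: "q0 \<in> X" by blast
    have "\<forall>q\<in>X. y q = y q0"
    proof
      fix q assume "q \<in> X"
      then have "ww q * y q = ww q0 * y q0" "ww q = ww q0" using y q0 assms unfolding eqz_def by blast+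
      then have "ww q0 * y q = ww q0 * y q0" by simp
      then show "y q = y q0" using lcancel[OF mg] by blast
    qed
    then show ?thesis by auto
  qed simp
qed

lemma xx_init: "xx I (Rs u) = (\<lambda>_. 1)"
proof -
  have "mgeT (w []) (reach [] \<inter> Rs u) (\<lambda>_. 1)"
    by (rule one_mge) (auto simp: reach_Nil w_Nil)
  then have "\<forall>t. reach t = I \<longrightarrow> mgeT (w t) (I \<inter> Rs u) (\<lambda>_. 1)"
  proof (intro allI impI)
    fix t assume "reach t = I"
    then show "mgeT (w t) (I \<inter> Rs u) (\<lambda>_. 1)"
      using mge_transfer_reach[of "[]" t u "\<lambda>_. 1"] \<open>mgeT (w []) (reach [] \<inter> Rs u) (\<lambda>_. 1)\<close>
      by (simp add: reach_Nil)
  qed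
  then show ?thesis unfolding xx_def by simp
qed

lemma xx_final: "xx (reach t) F = (\<lambda>_. 1)"
proof -
  have "mgeT (w t') (reach t \<inter> F) (\<lambda>_. 1)" if "reach t' = reach t" for t'
  proof (rule one_mge, intro ballI)
    fix p q assume "p \<in> reach t \<inter> F" "q \<in> reach t \<inter> F"
    then have "p \<in> reach t' \<inter> Rs []" "q \<in> reach t' \<inter> Rs []" using that Rs_Nil by auto
    then have "(t', w t' p * cont [] p) \<in> lang I F Delta" "(t', w t' q * cont [] q) \<in> lang I F Delta"
      using wc_lang[of _ t' "[]"] by auto
    moreover have "cont [] p = 1" "cont [] q = 1"
      using cont_path[of p "[]"] cont_path[of q "[]"] \<open>p \<in> reach t' \<inter> Rs []\<close> \<open>q \<in> reach t' \<inter> Rs []\<close>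
      by (auto simp: gen_Nil)
    ultimately show "w t' p = w t' q" using fn unfolding functional_def by auto
  qed
  then show ?thesis unfolding xx_def by auto
qed

end



context bm begin

definition psiF :: "'q set \<Rightarrow> 'a \<Rightarrow> 'q set \<Rightarrow> 'm option" where
  "psiF l a r = (if dLf l a \<inter> r = {} then None else Some (SOME z. \<forall>q q' m.
      q \<in> l \<inter> dRf r a \<longrightarrow> q' \<in> dLf l a \<inter> r \<longrightarrow> (q,(Some a,m),q') \<in> Delta \<longrightarrow>
      xx l (dRf r a) q * z = m * xx (dLf l a) r q'))"

lemma inv:
  "q \<in> reach t \<inter> Rs u \<Longrightarrow> psi_star dLf dRf psiF I t (Rs u) = Some (w t q * xx (reach t) (Rs u) q)"
proof (induction t arbitrary: u q rule: rev_induct)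
  case Nil
  then have "q \<in> I" by (simp add: reach_Nil)
  then show ?case by (simp add: psi_star_Nil w_Nil reach_Nil xx_init)
next
  case (snoc a t)
  define l where "l = reach t"
  define r where "r = Rs u"
  define l' where "l' = dLf l a"
  define r' where "r' = dRf r a"
  have l'eq: "reach (t@[a]) = l'" by (simp add: l'_def l_def reach_snoc)
  have r'eq: "Rs (a#u) = r'" by (simp add: r'_def r_def Rs_cons)
  have q': "q \<in> l' \<inter> r" using snoc.prems l'eq r_def by simp
  then obtain q0 m0 where q0: "q0 \<in> l" "(q0,(Some a,m0),q) \<in> Delta" unfolding l'_def dLf_def by blast
  have q0r: "q0 \<in> r'" using q0(2) q' unfolding r'_def dRf_def by blast
  have IH: "psi_star dLf dRf psiF I t r' = Some (w t q0 * xx l r' q0)"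
    using snoc.IH[of q0 "a#u"] q0 q0r by (simp add: l_def r'eq)
  define K where "K = w (t@[a]) q * xx l' r q"
  have mgel': "mgeT (w (t@[a])) (l' \<inter> r) (xx l' r)" using xx_mge[of "t@[a]" u] l'eq r_def by simp
  have mgel: "mgeT (w t) (l \<inter> r') (xx l r')" using xx_mge[of t "a#u"] l_def r'eq by simp
  have key: "w t p * (n * xx l' r p') = K"
    if p: "p \<in> l" and p': "p' \<in> l' \<inter> r" and tr: "(p,(Some a,n),p') \<in> Delta" for p p' n
  proof -
    obtain i where i: "i \<in> I" "(i,(t,w t p),p) \<in> gen_trans Delta" using w_path p l_def by blast
    have "(i,(t@[a],w t p * n),p') \<in> gen_trans Delta" using i(2) tr gen_snoc by blast
    then have "w t p * n = w (t@[a]) p'" using w_unique[OF i(1)] p' r_def by blast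
    moreover have "w (t@[a]) p' * xx l' r p' = K"
      using mgel' p' q' unfolding K_def mgeT_def eqz_def by blast
    ultimately show ?thesis by (simp add: mult.assoc[symmetric])
  qed
  define P where "P = (\<lambda>z. \<forall>q q' m.
      q \<in> l \<inter> dRf r a \<longrightarrow> q' \<in> dLf l a \<inter> r \<longrightarrow> (q,(Some a,m),q') \<in> Delta \<longrightarrow>
      xx l (dRf r a) q * z = m * xx (dLf l a) r q')"
  have exz: "\<exists>z. P z"
  proof -
    define y where "y = (\<lambda>p. SOME v. \<exists>n p'. p' \<in> l' \<inter> r \<and> (p,(Some a,n),p') \<in> Delta \<and> v = n * xx l' r p')"
    have y: "\<exists>n p'. p' \<in> l' \<inter> r \<and> (p,(Some a,n),p') \<in> Delta \<and> y p = n * xx l' r p'" if pl: "p \<in> l \<inter> r'" for p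
    proof -
      obtain p' n where "p' \<in> r" "(p,(Some a,n),p') \<in> Delta" using pl unfolding r'_def dRf_def by blast
      moreover then have "p' \<in> l'" using pl unfolding l'_def dLf_def by blast
      ultimately show ?thesis unfolding y_def by (intro someI_ex[where P="\<lambda>v. \<exists>n p'. p' \<in> l' \<inter> r \<and> (p,(Some a,n),p') \<in> Delta \<and> v = n * xx l' r p'"]) blast
    qed
    have yK: "w t p * y p = K" if pl: "p \<in> l \<inter> r'" for p
    proof -
      obtain n p' where "p' \<in> l' \<inter> r" "(p,(Some a,n),p') \<in> Delta" "y p = n * xx l' r p'"
        using y[OF pl] by blast
      then show ?thesis using key[of p p' n] pl by simp
    qed
    have "eqz (w t) (l \<inter> r') y" unfolding eqz_def using yK by simp
    then obtain z where z: "\<forall>p\<in>l \<inter> r'. y p = xx l r' p * z" using mgel unfolding mgeT_def by blast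
    have "P z" unfolding P_def
    proof (intro allI impI)
      fix p p' n assume a1: "p \<in> l \<inter> dRf r a" and a2: "p' \<in> dLf l a \<inter> r" and a3: "(p,(Some a,n),p') \<in> Delta"
      have "w t p * (xx l r' p * z) = K" using yK z a1 r'_def by force
      moreover have "w t p * (n * xx l' r p') = K" using key a1 a2 a3 l'_def by blast
      ultimately have "w t p * (xx l r' p * z) = w t p * (n * xx l' r p')" by simp
      then show "xx l (dRf r a) p * z = n * xx (dLf l a) r p'" using lcancel[OF mg] r'_def l'_def by blast
    qed
    then show ?thesis by blast
  qed
  have ne: "dLf l a \<inter> r \<noteq> {}" using q' l'_def by blast
  have psi: "psiF l a r = Some (Eps P)" unfolding psiF_def P_def using ne by simp
  have PE: "P (Eps P)" using exz by (rule someI_ex)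
  have "xx l r' q0 * Eps P = m0 * xx l' r q"
    using PE q0 q0r q' unfolding P_def r'_def l'_def by blast
  moreover have "w t q0 * m0 = w (t@[a]) q"
  proof -
    obtain i where i: "i \<in> I" "(i,(t,w t q0),q0) \<in> gen_trans Delta" using w_path q0(1) l_def by blast
    have "(i,(t@[a],w t q0 * m0),q) \<in> gen_trans Delta" using i(2) q0(2) gen_snoc by blast
    then show ?thesis using w_unique[OF i(1)] q' r_def by blast
  qed
  ultimately have "w t q0 * xx l r' q0 * Eps P = w (t@[a]) q * xx l' r q"
    by (metis mult.assoc)
  then show ?case
  proof -
    have d1: "delta_star dLf I t = l" by (simp add: l_def reach_def)
    have "psi_star dLf dRf psiF I (t@[a]) r = Some (w (t@[a]) q * xx l' r q)"
      unfolding psi_star_snoc d1 r'_def[symmetric] using IH psi \<open>w t q0 * xx l r' q0 * Eps P = _\<close> by simp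
    then show ?thesis unfolding l'eq r_def .
  qed
qed

lemma correct:
  assumes e: "([], 1) \<in> lang I F Delta"
  shows "psi_star dLf dRf psiF I t F = out_T I F Delta t"
proof (cases "reach t \<inter> F = {}")
  case False
  then obtain q where q: "q \<in> reach t \<inter> F" by blast
  then have "psi_star dLf dRf psiF I t F = Some (w t q)"
    using inv[of q t "[]"] by (simp add: Rs_Nil xx_final)
  moreover have lw: "(t, w t q) \<in> lang I F Delta"
    using w_path[of q t] q unfolding lang_def by blast
  moreover have "(THE m. (t,m) \<in> lang I F Delta) = w t q"
    using lw fn unfolding functional_def by blast
  ultimately show ?thesis unfolding out_T_def using lw by auto
next
  case True
  have "\<not> (\<exists>m. (t,m) \<in> lang I F Delta)"
  proof
    assume "\<exists>m. (t,m) \<in> lang I F Delta"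
    then obtain m p f where "p \<in> I" "f \<in> F" "(p,(t,m),f) \<in> gen_trans Delta" unfolding lang_def by blast
    then have "f \<in> reach t \<inter> F" using reach_iff by blast
    then show False using True by blast
  qed
  then have oT: "out_T I F Delta t = None" unfolding out_T_def by simp
  have "t \<noteq> []"
  proof
    assume "t = []"
    obtain p f where "p \<in> I" "f \<in> F" "(p,([],1),f) \<in> gen_trans Delta" using e unfolding lang_def by blast
    then have "f \<in> reach [] \<inter> F" by (auto simp: gen_Nil reach_Nil)
    then show False using True \<open>t = []\<close> by blast
  qed
  then obtain s a where t: "t = s @ [a]" by (cases t rule: rev_exhaust) auto
  have "psiF (reach s) a F = None" using True unfolding t psiF_def reach_snoc by simp
  then have "psi_star dLf dRf psiF I t F = None"
    unfolding t psi_star_snoc by (simp add: reach_def split: option.split)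
  then show ?thesis using oT by simp
qed

end



lemma delta_star_Cons: "delta_star d s (a#t) = delta_star d (d s a) t"
  by (simp add: delta_star_def)

lemma enc_ds:
  assumes inj: "inj_on enc P" and cl: "\<forall>S a. dL S a \<in> P"
  shows "S \<in> P \<Longrightarrow> delta_star (\<lambda>n a. enc (dL (inv_into P enc n) a)) (enc S) t = enc (delta_star dL S t)
     \<and> delta_star dL S t \<in> P"
proof (induction t arbitrary: S)
  case Nil then show ?case by (simp add: delta_star_def)
next
  case (Cons a t)
  show ?case using Cons.IH[of "dL S a"] cl inv_into_f_f[OF inj Cons.prems] by (simp add: delta_star_Cons)
qed

lemma enc_psi_rev:
  assumes inj: "inj_on enc P" and clL: "\<forall>S a. dL S a \<in> P" and clR: "\<forall>S a. dR S a \<in> P"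
    and S: "S \<in> P"
  shows "T \<in> P \<Longrightarrow> psi_rev (\<lambda>n a. enc (dL (inv_into P enc n) a)) (\<lambda>n a. enc (dR (inv_into P enc n) a))
      (\<lambda>n a m. psi (inv_into P enc n) a (inv_into P enc m)) (enc S) ts (enc T) = psi_rev dL dR psi S ts T"
proof (induction ts arbitrary: T)
  case Nil then show ?case by simp
next
  case (Cons s ts)
  have e1: "enc (dR (inv_into P enc (enc T)) s) = enc (dR T s)" using inv_into_f_f[OF inj Cons.prems] by simp
  have IH: "psi_rev (\<lambda>n a. enc (dL (inv_into P enc n) a)) (\<lambda>n a. enc (dR (inv_into P enc n) a))
      (\<lambda>n a m. psi (inv_into P enc n) a (inv_into P enc m)) (enc S) ts (enc (dR T s)) = psi_rev dL dR psi S ts (dR T s)"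
    using Cons.IH clR by blast
  have ds: "delta_star (\<lambda>n a. enc (dL (inv_into P enc n) a)) (enc S) (rev ts) = enc (delta_star dL S (rev ts))"
    "delta_star dL S (rev ts) \<in> P" using enc_ds[OF inj clL S] by blast+
  show ?case using e1 IH ds inv_into_f_f[OF inj ds(2)] inv_into_f_f[OF inj Cons.prems] by (simp split: option.split)
qed

theorem theorem1:
  fixes Sig :: "'a set" and Q I F :: "'q set" and Delta :: "('q,'a,'m::monoid_mult) trans"
  assumes "effective_mge_monoid TYPE('m)"
    and "is_transducer Sig Q I F Delta"
    and "real_time Delta"
    and "functional I F Delta"
    and "([], 1) \<in> lang I F Delta"
  shows "\<exists>(L::nat set) sL dL (R::nat set) sR dR (psi :: nat \<Rightarrow> 'a \<Rightarrow> nat \<Rightarrow> 'm option).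
           is_dfa Sig L sL dL \<and> is_dfa Sig R sR dR \<and>
           card L \<le> 2 ^ card Q \<and> card R \<le> 2 ^ card Q \<and>
           (\<forall>t. set t \<subseteq> Sig \<longrightarrow> out_B sL dL sR dR psi t = out_T I F Delta t)"
proof -
  have mg: "mge_monoid TYPE('m)" using assms(1) unfolding effective_mge_monoid_def by blast
  have tr: "finite Q" "I \<subseteq> Q" "F \<subseteq> Q" using assms(2) unfolding is_transducer_def by auto
  have DQ: "\<And>p a m q. (p,(a,m),q) \<in> Delta \<Longrightarrow> p \<in> Q \<and> q \<in> Q"
    using assms(2) unfolding is_transducer_def by fastforce
  interpret bm Q I F Delta
    using mg assms(3,4) tr DQ by unfold_locales auto
  obtain enc :: "'q set \<Rightarrow> nat" and n where inj: "inj_on enc (Pow Q)"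
    using finite_imp_inj_to_nat_seg[of "Pow Q"] tr(1) by auto
  define dec where "dec = inv_into (Pow Q) enc"
  define L where "L = enc ` Pow Q"
  define dL where "dL = (\<lambda>n a. enc (dLf (dec n) a))"
  define dR where "dR = (\<lambda>n a. enc (dRf (dec n) a))"
  define ps where "ps = (\<lambda>n a m. psiF (dec n) a (dec m))"
  have clL: "\<forall>S a. dLf S a \<in> Pow Q" using dLf_Q by blast
  have clR: "\<forall>S a. dRf S a \<in> Pow Q" using dRf_Q by blast
  have dfaL: "is_dfa Sig L (enc I) dL"
    unfolding is_dfa_def L_def dL_def using tr clL by auto
  have dfaR: "is_dfa Sig L (enc F) dR"
    unfolding is_dfa_def L_def dR_def using tr clR by auto
  have card: "card L \<le> 2 ^ card Q"
    unfolding L_def using card_image_le[of "Pow Q" enc] tr(1) by (simp add: card_Pow)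
  have out: "out_B (enc I) dL (enc F) dR ps t = out_T I F Delta t" for t
  proof -
    have "out_B (enc I) dL (enc F) dR ps t = psi_rev dLf dRf psiF I (rev t) F"
      unfolding out_B_def psi_star_def dL_def dR_def ps_def dec_def
      using enc_psi_rev[OF inj clL clR, of I F psiF "rev t"] tr by blast
    also have "\<dots> = out_T I F Delta t" using correct[OF assms(5)] unfolding psi_star_def by blast
    finally show ?thesis .
  qed
  show ?thesis using dfaL dfaR card out by blast
qed


end
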